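(* Let $(A,B)$ with $A\in\mathbb{R}^{n\times n}$, $B\in\mathbb{R}^{n\times r}$ be a controllable pair with controllability index $m$. Then for each real matrix $M\in\mathbb{R}^{n\times n}$, the pair $(M+gA,B)$ is controllable with controllability index no greater than $m$ for all but at most finitely many values of the real scalar $g$. Moreover, if $mr=n$, then $m$ is the controllability index of $(M+gA,B)$ for all but finitely many values of $g$.
   Context: The controllability index of a controllable pair $(A,B)$ is the smallest $k$ with $\mathrm{rank}[B\ AB\ \cdots\ A^{k-1}B]=n$. *)

theory Defs
  imports "HOL-Analysis.Analysis"
begin

text \<open>Matrix power (the componentwise ring structure on vec is not matrix multiplication).\<close>
fun matpow :: "real^'n^'n \<Rightarrow> nat \<Rightarrow> real^'n^'n" where
  "matpow A 0 = mat 1"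
| "matpow A (Suc k) = A ** matpow A k"

text \<open>Rank of the Kalman matrix [B AB ... A^(k-1)B], i.e. the dimension of its column space,
  which is spanned by the columns of the blocks A^i B, i < k.\<close>
definition kalman_rank :: "real^'n^'n \<Rightarrow> real^'r^'n \<Rightarrow> nat \<Rightarrow> nat" where
  "kalman_rank A B k = dim (\<Union>i<k. columns (matpow A i ** B))"

definition controllable :: "real^'n^'n \<Rightarrow> real^'r^'n \<Rightarrow> bool" where
  "controllable A B \<longleftrightarrow> (\<exists>k. kalman_rank A B k = CARD('n))"

definition ctrb_index :: "real^'n^'n \<Rightarrow> real^'r^'n \<Rightarrow> nat" where
  "ctrb_index A B = (LEAST k. kalman_rank A B k = CARD('n))"

end

theory Submission
  imports Defs "HOL-Computational_Algebra.Polynomial"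
begin

definition pf :: "(real \<Rightarrow> real) \<Rightarrow> bool" where
  "pf f \<longleftrightarrow> (\<exists>p. \<forall>x. f x = poly p x)"

lemma pf_const: "pf (\<lambda>x. c)"
  unfolding pf_def by (rule exI[of _ "[:c:]"]) simp

lemma pf_id: "pf (\<lambda>x. x)"
  unfolding pf_def by (rule exI[of _ "[:0,1:]"]) simp

lemma pf_add: "pf f \<Longrightarrow> pf g \<Longrightarrow> pf (\<lambda>x. f x + g x)"
  unfolding pf_def by (metis poly_add)

lemma pf_mult: "pf f \<Longrightarrow> pf g \<Longrightarrow> pf (\<lambda>x. f x * g x)"
  unfolding pf_def by (metis poly_mult)

lemma pf_sum: "finite S \<Longrightarrow> (\<And>i. i \<in> S \<Longrightarrow> pf (f i)) \<Longrightarrow> pf (\<lambda>x. \<Sum>i\<in>S. f i x)"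
proof (induction S rule: finite_induct)
  case empty
  then show ?case using pf_const[of 0] by simp
next
  case (insert a S)
  then show ?case by (simp add: pf_add)
qed

lemma pf_prod: "finite S \<Longrightarrow> (\<And>i. i \<in> S \<Longrightarrow> pf (f i)) \<Longrightarrow> pf (\<lambda>x. \<Prod>i\<in>S. f i x)"
proof (induction S rule: finite_induct)
  case empty
  then show ?case using pf_const[of 1] by simp
next
  case (insert a S)
  then show ?case by (simp add: pf_mult)
qed

lemma pf_det:
  fixes X :: "real \<Rightarrow> real^'n^'n"
  assumes "\<And>a b. pf (\<lambda>x. X x $ a $ b)"
  shows "pf (\<lambda>x. det (X x))"
  unfolding det_def
  by (intro pf_sum pf_mult pf_const pf_prod assms) auto

lemma pf_matmult:
  fixes X :: "real \<Rightarrow> real^'m^'n" and Y :: "real \<Rightarrow> real^'k^'m"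
  assumes "\<And>a b. pf (\<lambda>x. X x $ a $ b)" "\<And>a b. pf (\<lambda>x. Y x $ a $ b)"
  shows "pf (\<lambda>x. (X x ** Y x) $ a $ b)"
  unfolding matrix_matrix_mult_def
  by (simp, intro pf_sum pf_mult assms) auto

lemma pf_matpow:
  fixes M A :: "real^'n^'n"
  shows "pf (\<lambda>x. matpow (x *\<^sub>R M + A) i $ a $ b)"
proof (induction i arbitrary: a b)
  case 0
  then show ?case by (simp add: pf_const)
next
  case (Suc i)
  have "\<And>a b. pf (\<lambda>x. (x *\<^sub>R M + A) $ a $ b)"
    by (simp, intro pf_add pf_mult pf_id pf_const)
  then show ?case using Suc by (simp add: pf_matmult)
qed

lemma pf_finite_zeros:
  assumes "pf f" "f 0 \<noteq> 0"
  shows "finite {x. f x = 0}"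
proof -
  obtain p where p: "\<And>x. f x = poly p x" using assms(1) unfolding pf_def by blast
  then have "p \<noteq> 0" using assms(2) by auto
  then show ?thesis using poly_roots_finite[of p] p by simp
qed

lemma matpow_scale:
  fixes X :: "real^'n^'n"
  shows "matpow (c *\<^sub>R X) i = c ^ i *\<^sub>R matpow X i"
  by (induction i) (simp_all add: scalar_matrix_assoc[symmetric] matrix_scalar_ac)

lemma kalman_rank_le:
  fixes X :: "real^'n^'n" and B :: "real^'r^'n"
  shows "kalman_rank X B k \<le> k * CARD('r)"
proof -
  let ?S = "\<Union>i<k. columns (matpow X i ** B)"
  have c: "columns (matpow X i ** B) = (\<lambda>j. column j (matpow X i ** B)) ` UNIV" for i
    unfolding columns_def by auto
  have fin: "finite ?S" unfolding c by auto
  have "card ?S \<le> (\<Sum>i<k. card (columns (matpow X i ** B)))"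
    by (rule card_UN_le) simp
  also have "\<dots> \<le> (\<Sum>i<k. CARD('r))"
    by (intro sum_mono) (simp add: c card_image_le)
  finally have "card ?S \<le> k * CARD('r)" by simp
  moreover have "dim ?S \<le> card ?S"
    using dim_le_card[of ?S ?S] fin by (simp add: span_superset)
  ultimately show ?thesis unfolding kalman_rank_def by simp
qed


lemma cofinite_full:
  fixes A M :: "real^'n^'n" and B :: "real^'r^'n"
  assumes km: "kalman_rank A B m = CARD('n)"
  shows "finite {g. kalman_rank (M + g *\<^sub>R A) B m \<noteq> CARD('n)}"
proof -
  let ?S = "\<lambda>X. \<Union>i<m. columns (matpow X i ** B)"
  obtain B0 where B0: "B0 \<subseteq> ?S A" "independent B0" "?S A \<subseteq> span B0" "card B0 = dim (?S A)"
    using basis_exists[of "?S A"] by blast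
  have cB0: "card B0 = CARD('n)" using B0(4) km unfolding kalman_rank_def by simp
  then have "finite B0" by (metis card_gt_0_iff zero_less_card_finite)
  then obtain f where f: "bij_betw f (UNIV::'n set) B0"
    using finite_same_card_bij[of "UNIV::'n set" B0] cB0 by auto
  have "\<forall>k. \<exists>ij. fst ij < m \<and> f k = column (snd ij) (matpow A (fst ij) ** B)"
  proof
    fix k
    have "f k \<in> ?S A" using f B0(1) bij_betwE by blast
    then show "\<exists>ij. fst ij < m \<and> f k = column (snd ij) (matpow A (fst ij) ** B)"
      unfolding columns_def by auto
  qed
  then obtain h where h: "\<And>k. fst (h k) < m \<and> f k = column (snd (h k)) (matpow A (fst (h k)) ** B)"
    by metis
  define Q where "Q x = (\<chi> a k. (matpow (x *\<^sub>R M + A) (fst (h k)) ** B) $ a $ snd (h k))" for x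
  have colQ: "column k (Q x) = column (snd (h k)) (matpow (x *\<^sub>R M + A) (fst (h k)) ** B)" for k x
    unfolding Q_def column_def by simp
  have "columns (Q 0) = range f"
    unfolding columns_def colQ using h by auto
  then have "columns (Q 0) = B0" using f by (simp add: bij_betw_def)
  moreover have "card B0 = dim B0"
    using basis_card_eq_dim[of B0 B0] B0(2) span_superset by blast
  ultimately have "rank (Q 0) = CARD('n)"
    using column_rank_def[of "Q 0"] cB0 by simp
  then have d0: "det (Q 0) \<noteq> 0" using det_eq_0_rank[of "Q 0"] by simp
  have "pf (\<lambda>x. det (Q x))"
    unfolding Q_def by (intro pf_det) (simp, intro pf_matmult pf_matpow pf_const)
  then have finZ: "finite {x. det (Q x) = 0}" using pf_finite_zeros d0 by blast
  have good: "kalman_rank (M + g *\<^sub>R A) B m = CARD('n)" if g: "g \<noteq> 0" "det (Q (1/g)) \<noteq> 0" for g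
  proof -
    let ?x = "1/g"
    have e: "?x *\<^sub>R M + A = ?x *\<^sub>R (M + g *\<^sub>R A)" using g(1) by (simp add: scaleR_add_right)
    have "columns (Q ?x) \<subseteq> span (?S (M + g *\<^sub>R A))"
    proof
      fix v assume "v \<in> columns (Q ?x)"
      then obtain k where v: "v = column k (Q ?x)" unfolding columns_def by auto
      have "v = ?x ^ fst (h k) *\<^sub>R column (snd (h k)) (matpow (M + g *\<^sub>R A) (fst (h k)) ** B)"
        unfolding v colQ e matpow_scale scalar_matrix_assoc[symmetric]
        by (simp add: column_def vec_eq_iff)
      moreover have "column (snd (h k)) (matpow (M + g *\<^sub>R A) (fst (h k)) ** B) \<in> ?S (M + g *\<^sub>R A)"
        using h[of k] unfolding columns_def by auto
      ultimately show "v \<in> span (?S (M + g *\<^sub>R A))"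
        by (simp add: span_base span_scale)
    qed
    then have "dim (columns (Q ?x)) \<le> dim (?S (M + g *\<^sub>R A))"
      by (metis dim_span dim_subset)
    moreover have "rank (Q ?x) = CARD('n)"
      using g(2) det_eq_0_rank[of "Q ?x"] rank_bound[of "Q ?x"] by simp
    ultimately show ?thesis
      unfolding kalman_rank_def using column_rank_def dim_subset_UNIV_cart
      by (metis le_antisym)
  qed
  have "{g. kalman_rank (M + g *\<^sub>R A) B m \<noteq> CARD('n)} \<subseteq> insert 0 ((\<lambda>x. 1/x) ` {x. det (Q x) = 0})"
  proof
    fix g assume "g \<in> {g. kalman_rank (M + g *\<^sub>R A) B m \<noteq> CARD('n)}"
    then have "g = 0 \<or> det (Q (1/g)) = 0" using good by auto
    then show "g \<in> insert 0 ((\<lambda>x. 1/x) ` {x. det (Q x) = 0})"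
      by (auto intro!: image_eqI[of g _ "1/g"])
  qed
  then show ?thesis using finZ finite_subset by blast
qed


theorem lemma4:
  fixes A M :: "real^'n^'n" and B :: "real^'r^'n" and m :: nat
  assumes "controllable A B" and "ctrb_index A B = m"
  shows "finite {g::real. \<not> (controllable (M + g *\<^sub>R A) B \<and> ctrb_index (M + g *\<^sub>R A) B \<le> m)} \<and>
         (m * CARD('r) = CARD('n) \<longrightarrow>
         finite {g::real. \<not> (controllable (M + g *\<^sub>R A) B \<and> ctrb_index (M + g *\<^sub>R A) B = m)})"
proof -
  have km: "kalman_rank A B m = CARD('n)"
    using assms LeastI_ex[of "\<lambda>k. kalman_rank A B k = CARD('n)"]
    unfolding controllable_def ctrb_index_def by simp
  have fin: "finite {g. kalman_rank (M + g *\<^sub>R A) B m \<noteq> CARD('n)}"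
    by (rule cofinite_full[OF km])
  have 1: "controllable (M + g *\<^sub>R A) B \<and> ctrb_index (M + g *\<^sub>R A) B \<le> m"
    if "kalman_rank (M + g *\<^sub>R A) B m = CARD('n)" for g
    using that unfolding controllable_def ctrb_index_def by (blast intro: Least_le)
  have 2: "controllable (M + g *\<^sub>R A) B \<and> ctrb_index (M + g *\<^sub>R A) B = m"
    if "kalman_rank (M + g *\<^sub>R A) B m = CARD('n)" "m * CARD('r) = CARD('n)" for g
  proof -
    have "m \<le> k" if "kalman_rank (M + g *\<^sub>R A) B k = CARD('n)" for k
    proof (rule ccontr)
      assume "\<not> m \<le> k"
      then have "k * CARD('r) < m * CARD('r)" by simp
      moreover have "kalman_rank (M + g *\<^sub>R A) B k \<le> k * CARD('r)" by (rule kalman_rank_le)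
      ultimately show False using that \<open>m * CARD('r) = CARD('n)\<close> by linarith
    qed
    then have "ctrb_index (M + g *\<^sub>R A) B = m"
      unfolding ctrb_index_def using that(1) by (intro Least_equality) auto
    then show ?thesis using 1 that by simp
  qed
  show ?thesis
  proof
    show "finite {g::real. \<not> (controllable (M + g *\<^sub>R A) B \<and> ctrb_index (M + g *\<^sub>R A) B \<le> m)}"
      by (rule finite_subset[OF _ fin]) (use 1 in blast)
    show "m * CARD('r) = CARD('n) \<longrightarrow>
         finite {g::real. \<not> (controllable (M + g *\<^sub>R A) B \<and> ctrb_index (M + g *\<^sub>R A) B = m)}"
      using 2 by (intro impI finite_subset[OF _ fin]) blast
  qed
qed

end
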